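(* Let $n=4$ and define $\xi_{ijkl}=(\Omega,\partial_i\partial_j\partial_k\partial_l\Omega)$. Then $\xi_{ijkl}=-(D_jD_kD_l\Omega,D_i\Omega)=(D_kD_l\Omega,D_jD_i\Omega)$.
   Context: $\mathcal M$ is the moduli space of polarized Calabi–Yau fourfolds, of complex dimension $m$, with local holomorphic coordinates $z_1,\dots,z_m$, $\partial_i=\partial/\partial z_i$. Locally the primitive middle cohomology of the fibres is identified with one fixed space $H$ with varying Hodge decomposition $H=\bigoplus_{p+q=4}H^{p,q}$. $Q(\phi,\psi)=(-1)^{n(n-1)/2}\int\phi\wedge\psi$, $(\xi,\eta)=(\sqrt{-1})^4Q(\xi,\eta)$ (bilinear). $\Omega$ is a nonzero local holomorphic section of $F^4$. Weil–Petersson metric $g_{i\bar j}=-\partial_i\bar\partial_j\log(\Omega,\bar\Omega)$, Christoffel symbols $\Gamma^k_{ij}=g^{k\bar q}\partial_jg_{i\bar q}$, $K_i=-\partial_i\log(\Omega,\bar\Omega)$, $D_i\Omega=\partial_i\Omega+K_i\Omega$, $D_jD_i\Omega=\partial_jD_i\Omega-\sum_k\Gamma^k_{ij}D_k\Omega+K_jD_i\Omega$, $T_{k\alpha i}=\partial_kD_\alpha D_i\Omega+K_kD_\alpha D_i\Omega-\sum_p\Gamma^p_{\alpha k}D_pD_i\Omega-\sum_p\Gamma^p_{ik}D_\alpha D_p\Omega$, and $D_kD_\alpha D_i\Omega$ is the $H^{1,3}$-component of $T_{k\alpha i}$. *)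

theory Defs
  imports "HOL-Analysis.Analysis"
begin

text \<open>
Abstract local model of the variation of Hodge structure on the primitive middle
cohomology of a family of polarized Calabi--Yau fourfolds over a coordinate chart.
The fixed space H = complex^'n, with the real structure given by componentwise
complex conjugation (the coordinates are taken w.r.t. a basis of H_R).
The Hodge decomposition at z is hp p z = H^{p,4-p}(z), p = 0..4.
\<close>

definition wirt :: "'m::finite \<Rightarrow> (complex^'m \<Rightarrow> complex) \<Rightarrow> complex^'m \<Rightarrow> complex" where
  "wirt i f z =
     (vector_derivative (\<lambda>t::real. f (z + t *\<^sub>R axis i 1)) (at 0)
      - \<i> * vector_derivative (\<lambda>t::real. f (z + t *\<^sub>R axis i \<i>)) (at 0)) / 2"

definition awirt :: "'m::finite \<Rightarrow> (complex^'m \<Rightarrow> complex) \<Rightarrow> complex^'m \<Rightarrow> complex" where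
  "awirt i f z =
     (vector_derivative (\<lambda>t::real. f (z + t *\<^sub>R axis i 1)) (at 0)
      + \<i> * vector_derivative (\<lambda>t::real. f (z + t *\<^sub>R axis i \<i>)) (at 0)) / 2"

definition vwirt :: "'m::finite \<Rightarrow> (complex^'m \<Rightarrow> complex^'n) \<Rightarrow> complex^'m \<Rightarrow> complex^'n" where
  "vwirt i F z = (\<chi> a. wirt i (\<lambda>w. F w $ a) z)"

definition cholo_at :: "(complex^'m::finite \<Rightarrow> complex) \<Rightarrow> complex^'m \<Rightarrow> bool" where
  "cholo_at f z \<longleftrightarrow> (\<exists>L. (f has_derivative L) (at z) \<and> (\<forall>c v. L (c *s v) = c * L v))"

text \<open>Holomorphic on U (together with all its holomorphic partial derivatives,
 which is automatic for holomorphic functions).\<close>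
definition hol_on :: "(complex^'m::finite) set \<Rightarrow> (complex^'m \<Rightarrow> complex) \<Rightarrow> bool" where
  "hol_on U f \<longleftrightarrow> (\<forall>is::'m list. \<forall>z\<in>U. cholo_at (foldr wirt is f) z)"

definition vcnj :: "complex^'n \<Rightarrow> complex^'n" where
  "vcnj v = (\<chi> a. cnj (v $ a))"

text \<open>The bilinear form (xi,eta) = (sqrt -1)^4 Q(xi,eta) = Q(xi,eta), Q given by a real matrix.\<close>
definition pr :: "real^'n^'n \<Rightarrow> complex^'n::finite \<Rightarrow> complex^'n \<Rightarrow> complex" where
  "pr B x y = (\<Sum>a\<in>UNIV. \<Sum>b\<in>UNIV. x $ a * complex_of_real (B $ a $ b) * y $ b)"

definition csubspace :: "(complex^'n) set \<Rightarrow> bool" where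
  "csubspace S \<longleftrightarrow> 0 \<in> S \<and> (\<forall>x\<in>S. \<forall>y\<in>S. x + y \<in> S) \<and> (\<forall>c. \<forall>x\<in>S. c *s x \<in> S)"

definition filt :: "(nat \<Rightarrow> 'z \<Rightarrow> (complex^'n) set) \<Rightarrow> nat \<Rightarrow> 'z \<Rightarrow> (complex^'n) set" where
  "filt hp p z = {(\<Sum>q\<in>{p..4}. y q) | y. \<forall>q\<in>{p..4}. y q \<in> hp q z}"

definition hcomp :: "(nat \<Rightarrow> 'z \<Rightarrow> (complex^'n) set) \<Rightarrow> nat \<Rightarrow> 'z \<Rightarrow> complex^'n \<Rightarrow> complex^'n" where
  "hcomp hp p z v = (THE x. \<exists>y. (\<forall>q\<le>4. y q \<in> hp q z) \<and> v = (\<Sum>q\<le>4. y q) \<and> y p = x)"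

definition hodge_structure ::
  "real^'n^'n \<Rightarrow> (nat \<Rightarrow> complex^'m \<Rightarrow> (complex^'n::finite) set) \<Rightarrow> (complex^'m) set \<Rightarrow> bool" where
  "hodge_structure B hp U \<longleftrightarrow>
     (\<forall>a b. B $ a $ b = B $ b $ a) \<and> det B \<noteq> 0 \<and>
     (\<forall>z\<in>U.
        (\<forall>p\<le>4. csubspace (hp p z)) \<and>
        (\<forall>v. \<exists>!y. (\<forall>q. (q \<le> 4 \<longrightarrow> y q \<in> hp q z) \<and> (4 < q \<longrightarrow> y q = 0)) \<and> v = (\<Sum>q\<le>4. y q)) \<and>
        (\<forall>p\<le>4. vcnj ` hp p z = hp (4 - p) z) \<and>
        (\<forall>p\<le>4. \<forall>p'\<le>4. p + p' \<noteq> 4 \<longrightarrow> (\<forall>x\<in>hp p z. \<forall>y\<in>hp p' z. pr B x y = 0)) \<and>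
        (\<forall>p\<le>4. \<forall>x\<in>hp p z. x \<noteq> 0 \<longrightarrow>
            (let c = \<i> ^ p * (- \<i>) ^ (4 - p) * pr B x (vcnj x) in Im c = 0 \<and> Re c > 0)))"

definition transversal ::
  "(nat \<Rightarrow> complex^'m::finite \<Rightarrow> (complex^'n::finite) set) \<Rightarrow> (complex^'m) set \<Rightarrow> bool" where
  "transversal hp U \<longleftrightarrow>
     (\<forall>p\<in>{1..4}. \<forall>(s :: complex^'m \<Rightarrow> complex^'n) z i. z \<in> U \<longrightarrow>
        (\<forall>w\<in>U. s w \<in> filt hp p w) \<longrightarrow> s differentiable (at z) \<longrightarrow>
        vwirt i s z \<in> filt hp (p - 1) z)"

definition lw :: "real^'n^'n \<Rightarrow> (complex^'m \<Rightarrow> complex^'n::finite) \<Rightarrow> complex^'m \<Rightarrow> complex" where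
  "lw B \<Omega> z = Ln (pr B (\<Omega> z) (vcnj (\<Omega> z)))"

definition Kf :: "real^'n^'n \<Rightarrow> (complex^'m::finite \<Rightarrow> complex^'n::finite) \<Rightarrow> 'm \<Rightarrow> complex^'m \<Rightarrow> complex" where
  "Kf B \<Omega> i z = - wirt i (lw B \<Omega>) z"

definition gm :: "real^'n^'n \<Rightarrow> (complex^'m::finite \<Rightarrow> complex^'n::finite) \<Rightarrow> 'm \<Rightarrow> 'm \<Rightarrow> complex^'m \<Rightarrow> complex" where
  "gm B \<Omega> i j z = - wirt i (awirt j (lw B \<Omega>)) z"

definition gmat :: "real^'n^'n \<Rightarrow> (complex^'m::finite \<Rightarrow> complex^'n::finite) \<Rightarrow> complex^'m \<Rightarrow> complex^'m^'m" where
  "gmat B \<Omega> z = (\<chi> i j. gm B \<Omega> i j z)"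

text \<open>g^{k qbar}: sum_q g^{k qbar} g_{p qbar} = delta_{kp}.\<close>
definition ginv :: "real^'n^'n \<Rightarrow> (complex^'m::finite \<Rightarrow> complex^'n::finite) \<Rightarrow> complex^'m \<Rightarrow> complex^'m^'m" where
  "ginv B \<Omega> z = matrix_inv (transpose (gmat B \<Omega> z))"

definition Gam :: "real^'n^'n \<Rightarrow> (complex^'m::finite \<Rightarrow> complex^'n::finite) \<Rightarrow> 'm \<Rightarrow> 'm \<Rightarrow> 'm \<Rightarrow> complex^'m \<Rightarrow> complex" where
  "Gam B \<Omega> k i j z = (\<Sum>q\<in>UNIV. ginv B \<Omega> z $ k $ q * wirt j (gm B \<Omega> i q) z)"

definition D1 :: "real^'n^'n \<Rightarrow> (complex^'m::finite \<Rightarrow> complex^'n::finite) \<Rightarrow> 'm \<Rightarrow> complex^'m \<Rightarrow> complex^'n" where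
  "D1 B \<Omega> i z = vwirt i \<Omega> z + Kf B \<Omega> i z *s \<Omega> z"

text \<open>D2 B Omega j i = D_j D_i Omega\<close>
definition D2 :: "real^'n^'n \<Rightarrow> (complex^'m::finite \<Rightarrow> complex^'n::finite) \<Rightarrow> 'm \<Rightarrow> 'm \<Rightarrow> complex^'m \<Rightarrow> complex^'n" where
  "D2 B \<Omega> j i z = vwirt j (D1 B \<Omega> i) z - (\<Sum>k\<in>UNIV. Gam B \<Omega> k i j z *s D1 B \<Omega> k z)
                    + Kf B \<Omega> j z *s D1 B \<Omega> i z"

definition T3 :: "real^'n^'n \<Rightarrow> (complex^'m::finite \<Rightarrow> complex^'n::finite) \<Rightarrow> 'm \<Rightarrow> 'm \<Rightarrow> 'm \<Rightarrow> complex^'m \<Rightarrow> complex^'n" where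
  "T3 B \<Omega> k \<alpha> i z = vwirt k (D2 B \<Omega> \<alpha> i) z + Kf B \<Omega> k z *s D2 B \<Omega> \<alpha> i z
        - (\<Sum>p\<in>UNIV. Gam B \<Omega> p \<alpha> k z *s D2 B \<Omega> p i z)
        - (\<Sum>p\<in>UNIV. Gam B \<Omega> p i k z *s D2 B \<Omega> \<alpha> p z)"

text \<open>D_k D_alpha D_i Omega = H^{1,3}-component of T_{k alpha i}\<close>
definition D3 :: "real^'n^'n \<Rightarrow> (nat \<Rightarrow> complex^'m \<Rightarrow> (complex^'n) set) \<Rightarrow> (complex^'m::finite \<Rightarrow> complex^'n::finite)
                  \<Rightarrow> 'm \<Rightarrow> 'm \<Rightarrow> 'm \<Rightarrow> complex^'m \<Rightarrow> complex^'n" where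
  "D3 B hp \<Omega> k \<alpha> i z = hcomp hp 1 z (T3 B \<Omega> k \<alpha> i z)"

definition xi :: "real^'n^'n \<Rightarrow> (complex^'m::finite \<Rightarrow> complex^'n::finite) \<Rightarrow> 'm \<Rightarrow> 'm \<Rightarrow> 'm \<Rightarrow> 'm \<Rightarrow> complex^'m \<Rightarrow> complex" where
  "xi B \<Omega> i j k l z = pr B (\<Omega> z) (vwirt i (vwirt j (vwirt k (vwirt l \<Omega>))) z)"

end

theory Submission
  imports Defs
begin

lemma wirt_deriv:
  assumes "(f has_derivative f') (at z)"
  shows "wirt i f z = (f' (axis i 1) - \<i> * f' (axis i \<i>)) / 2"
    and "awirt i f z = (f' (axis i 1) + \<i> * f' (axis i \<i>)) / 2"
proof -
  have bl: "bounded_linear f'" using assms by (rule has_derivative_bounded_linear)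
  have *: "vector_derivative (\<lambda>t::real. f (z + t *\<^sub>R v)) (at 0) = f' v" for v
  proof -
    have "((\<lambda>t::real. z + t *\<^sub>R v) has_derivative (\<lambda>t. t *\<^sub>R v)) (at 0)"
      by (auto intro!: derivative_eq_intros)
    moreover have "(f has_derivative f') (at (z + (0::real) *\<^sub>R v))" using assms by simp
    ultimately have "((\<lambda>t::real. f (z + t *\<^sub>R v)) has_derivative (\<lambda>t. f' (t *\<^sub>R v))) (at 0)"
      using has_derivative_compose[of "\<lambda>t::real. z + t *\<^sub>R v" _ 0 UNIV f f'] by (simp add: o_def)
    then have "((\<lambda>t::real. f (z + t *\<^sub>R v)) has_vector_derivative f' v) (at 0)"
      unfolding has_vector_derivative_def using bl by (simp add: linear_simps)
    then show ?thesis by (rule vector_derivative_at)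
  qed
  show "wirt i f z = (f' (axis i 1) - \<i> * f' (axis i \<i>)) / 2"
    unfolding wirt_def * ..
  show "awirt i f z = (f' (axis i 1) + \<i> * f' (axis i \<i>)) / 2"
    unfolding awirt_def * ..
qed

lemma wirt_add:
  assumes "f differentiable (at z)" "g differentiable (at z)"
  shows "wirt i (\<lambda>w. f w + g w) z = wirt i f z + wirt i g z"
proof -
  obtain f' g' where f: "(f has_derivative f') (at z)" and g: "(g has_derivative g') (at z)"
    using assms unfolding differentiable_def by blast
  have "((\<lambda>w. f w + g w) has_derivative (\<lambda>v. f' v + g' v)) (at z)"
    using f g by (rule has_derivative_add)
  note e1 = wirt_deriv(1)[OF this, of i] and e2 = wirt_deriv(1)[OF f, of i] and e3 = wirt_deriv(1)[OF g, of i]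
  show ?thesis unfolding e1 e2 e3 by (simp add: field_simps)
qed

lemma wirt_mult:
  assumes "f differentiable (at z)" "g differentiable (at z)"
  shows "wirt i (\<lambda>w. f w * g w) z = wirt i f z * g z + f z * wirt i g z"
proof -
  obtain f' g' where f: "(f has_derivative f') (at z)" and g: "(g has_derivative g') (at z)"
    using assms unfolding differentiable_def by blast
  have "((\<lambda>w. f w * g w) has_derivative (\<lambda>v. f z * g' v + f' v * g z)) (at z)"
    using f g by (rule has_derivative_mult)
  note e1 = wirt_deriv(1)[OF this, of i] and e2 = wirt_deriv(1)[OF f, of i] and e3 = wirt_deriv(1)[OF g, of i]
  show ?thesis unfolding e1 e2 e3 by (simp add: field_simps)
qed

lemma wirt_const: "wirt i (\<lambda>w. c) z = 0"
  using wirt_deriv(1)[of "\<lambda>w. c" "\<lambda>v. 0" z i] by simp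

lemma wirt_sum:
  assumes "finite S" "\<forall>a\<in>S. f a differentiable (at z)"
  shows "wirt i (\<lambda>w. \<Sum>a\<in>S. f a w) z = (\<Sum>a\<in>S. wirt i (f a) z)"
  using assms
proof (induction S rule: finite_induct)
  case empty then show ?case by (simp add: wirt_const)
next
  case (insert x F)
  have d: "(\<lambda>w. \<Sum>a\<in>F. f a w) differentiable (at z)"
    using insert by (intro differentiable_sum) auto
  have "wirt i (\<lambda>w. \<Sum>a\<in>insert x F. f a w) z = wirt i (\<lambda>w. f x w + (\<Sum>a\<in>F. f a w)) z"
    using insert by simp
  also have "\<dots> = wirt i (f x) z + wirt i (\<lambda>w. \<Sum>a\<in>F. f a w) z"
    using insert d wirt_add[of "f x" z "\<lambda>w. \<Sum>a\<in>F. f a w" i] by simp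
  finally show ?case using insert by simp
qed

lemma wirt_local0:
  assumes "open U" "z \<in> U" "\<forall>w\<in>U. f w = 0"
  shows "wirt i f z = 0"
proof -
  have "((\<lambda>w. 0) has_derivative (\<lambda>v. 0)) (at z)" by simp
  then have "(f has_derivative (\<lambda>v. 0)) (at z)"
    using has_derivative_transform_within_open[of "\<lambda>w. 0" "\<lambda>v. 0" z UNIV U f] assms by auto
  from wirt_deriv(1)[OF this] show ?thesis by simp
qed

lemma vwirt_nth: "vwirt i F z $ a = wirt i (\<lambda>w. F w $ a) z"
  by (simp add: vwirt_def)

lemma bl_diff_comp:
  assumes "bounded_linear L" "F differentiable (at z)"
  shows "(\<lambda>w. L (F w)) differentiable (at z)"
  using assms bounded_linear.has_derivative[OF assms(1)] unfolding differentiable_def by blast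

lemma differentiable_nth:
  assumes "F differentiable (at z)"
  shows "(\<lambda>w. F w $ a) differentiable (at z)"
  by (rule bl_diff_comp[OF bounded_linear_vec_nth assms])

lemma vwirt_add:
  assumes "F differentiable (at z)" "G differentiable (at z)"
  shows "vwirt i (\<lambda>w. F w + G w) z = vwirt i F z + vwirt i G z"
  using wirt_add[OF differentiable_nth[OF assms(1)] differentiable_nth[OF assms(2)]]
  by (simp add: vec_eq_iff vwirt_nth)

lemma bl_axis: "bounded_linear (axis a :: complex \<Rightarrow> complex^'n)"
proof -
  have "linear (axis a :: complex \<Rightarrow> complex^'n)"
    by (rule linearI) (simp_all add: axis_def vec_eq_iff)
  then show ?thesis by (simp add: linear_conv_bounded_linear)
qed

lemma sum_axis_nth: "(\<Sum>a\<in>UNIV. axis a (x $ a)) = (x :: complex^'n)"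
  by (simp add: vec_eq_iff axis_def sum_component)

lemma differentiable_vecI:
  assumes "\<forall>a. (\<lambda>w. F w $ a) differentiable (at z)"
  shows "(F :: 'b::real_normed_vector \<Rightarrow> complex^'n) differentiable (at z)"
proof -
  have "(\<lambda>w. \<Sum>a\<in>UNIV. axis a (F w $ a)) differentiable (at z)"
    using assms bl_diff_comp[OF bl_axis] by (intro differentiable_sum) auto
  then show ?thesis by (simp add: sum_axis_nth)
qed

coinductive_set smth :: "(complex^'m::finite) set \<Rightarrow> (complex^'m \<Rightarrow> complex) set" for U where
  smthI: "(\<forall>w\<in>U. f differentiable (at w)) \<Longrightarrow>
    (\<forall>v. \<exists>g. g \<in> smth U \<and> (\<forall>w\<in>U. frechet_derivative f (at w) v = g w)) \<Longrightarrow> f \<in> smth U"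

inductive_set gen :: "(complex^'m::finite) set \<Rightarrow> (complex^'m \<Rightarrow> complex) set" for U where
  g_base: "f \<in> smth U \<Longrightarrow> f \<in> gen U"
| g_hol: "hol_on U f \<Longrightarrow> f \<in> gen U"
| g_const: "(\<lambda>w. c) \<in> gen U"
| g_add: "f \<in> gen U \<Longrightarrow> g \<in> gen U \<Longrightarrow> (\<lambda>w. f w + g w) \<in> gen U"
| g_mult: "f \<in> gen U \<Longrightarrow> g \<in> gen U \<Longrightarrow> (\<lambda>w. f w * g w) \<in> gen U"
| g_cnj: "f \<in> gen U \<Longrightarrow> (\<lambda>w. cnj (f w)) \<in> gen U"
| g_inv: "f \<in> gen U \<Longrightarrow> \<forall>w\<in>U. f w \<noteq> 0 \<Longrightarrow> (\<lambda>w. inverse (f w)) \<in> gen U"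
| g_ln: "f \<in> gen U \<Longrightarrow> \<forall>w\<in>U. f w \<notin> \<real>\<^sub>\<le>\<^sub>0 \<Longrightarrow> (\<lambda>w. Ln (f w)) \<in> gen U"
| g_agree: "f \<in> gen U \<Longrightarrow> \<forall>w\<in>U. g w = f w \<Longrightarrow> g \<in> gen U"

lemma gen_sum:
  assumes "finite S" "\<forall>a\<in>S. h a \<in> gen U"
  shows "(\<lambda>w. \<Sum>a\<in>S. h a w) \<in> gen U"
  using assms
proof (induction S rule: finite_induct)
  case empty then show ?case using g_const[where c=0] by simp
next
  case (insert x F)
  then have "(\<lambda>w. h x w + (\<Sum>a\<in>F. h a w)) \<in> gen U" by (intro g_add) auto
  then show ?case using insert by simp
qed

lemma gen_prod:
  assumes "finite S" "\<forall>a\<in>S. h a \<in> gen U"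
  shows "(\<lambda>w. \<Prod>a\<in>S. h a w) \<in> gen U"
  using assms
proof (induction S rule: finite_induct)
  case empty then show ?case using g_const[where c=1] by simp
next
  case (insert x F)
  then have "(\<lambda>w. h x w * (\<Prod>a\<in>F. h a w)) \<in> gen U" by (intro g_mult) auto
  then show ?case using insert by simp
qed

lemma gen_cmult: "f \<in> gen U \<Longrightarrow> (\<lambda>w. c * f w) \<in> gen U"
  by (rule g_mult[OF g_const])

lemma gen_minus: "f \<in> gen U \<Longrightarrow> g \<in> gen U \<Longrightarrow> (\<lambda>w. f w - g w) \<in> gen U"
  using g_add[OF _ gen_cmult[of g U "-1"], of f] by simp

lemma gen_uminus: "f \<in> gen U \<Longrightarrow> (\<lambda>w. - f w) \<in> gen U"
  using gen_cmult[of f U "-1"] by simp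

lemma axis_i: "axis i \<i> = \<i> *s (axis i 1 :: complex^'m)"
  by (simp add: axis_def vec_eq_iff)

lemma hol_wirt: "hol_on U f \<Longrightarrow> hol_on U (wirt i f)"
  unfolding hol_on_def
proof (intro allI ballI)
  fix "is" z assume "\<forall>is. \<forall>z\<in>U. cholo_at (foldr wirt is f) z" "z \<in> U"
  then have "cholo_at (foldr wirt (is @ [i]) f) z" by blast
  then show "cholo_at (foldr wirt is (wirt i f)) z" by simp
qed

lemma cholo_deriv:
  assumes "(f has_derivative L) (at w)" "\<forall>c v. L (c *s v) = c * L v"
  shows "L v = (\<Sum>i\<in>UNIV. v $ i * wirt i f w)"
proof -
  have bl: "bounded_linear L" using assms(1) by (rule has_derivative_bounded_linear)
  have wi: "wirt i f w = L (axis i 1)" for i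
    using wirt_deriv(1)[OF assms(1), of i] assms(2) by (simp add: axis_i field_simps)
  have "L v = L (\<Sum>i\<in>UNIV. v $ i *s axis i 1)" by (simp add: basis_expansion)
  also have "\<dots> = (\<Sum>i\<in>UNIV. L (v $ i *s axis i 1))"
    using bl by (simp add: linear_sum bounded_linear.linear)
  also have "\<dots> = (\<Sum>i\<in>UNIV. v $ i * wirt i f w)" using assms(2) wi by simp
  finally show ?thesis .
qed

lemma gen_step:
  assumes "open U" "f \<in> gen U"
  shows "(\<forall>w\<in>U. f differentiable (at w)) \<and>
    (\<forall>v. \<exists>g. g \<in> gen U \<and> (\<forall>w\<in>U. frechet_derivative f (at w) v = g w))"
  using assms(2)
proof (induction rule: gen.induct)
  case (g_base f)
  then show ?case by (cases rule: smth.cases) (metis gen.g_base)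
next
  case (g_hol f)
  have d: "\<exists>L. (f has_derivative L) (at w) \<and> (\<forall>c v. L (c *s v) = c * L v)" if "w \<in> U" for w
    using g_hol that unfolding hol_on_def cholo_at_def by (metis foldr_Nil id_apply)
  have 1: "\<forall>w\<in>U. f differentiable (at w)" using d unfolding differentiable_def by blast
  have 2: "\<exists>g. g \<in> gen U \<and> (\<forall>w\<in>U. frechet_derivative f (at w) v = g w)" for v
  proof (intro exI conjI ballI)
    show "(\<lambda>w. \<Sum>i\<in>UNIV. v $ i * wirt i f w) \<in> gen U"
      using g_hol by (intro gen_sum ballI gen_cmult gen.g_hol hol_wirt) auto
    fix w assume "w \<in> U"
    then obtain L where L: "(f has_derivative L) (at w)" "\<forall>c v. L (c *s v) = c * L v" using d by blast
    then have "frechet_derivative f (at w) = L" by (simp add: frechet_derivative_at[symmetric])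
    then show "frechet_derivative f (at w) v = (\<Sum>i\<in>UNIV. v $ i * wirt i f w)"
      using cholo_deriv[OF L] by simp
  qed
  show ?case using 1 2 by blast
next
  case (g_const c)
  have "frechet_derivative (\<lambda>w. c) (at w) v = 0" for w v
    using frechet_derivative_at[OF has_derivative_const[of c "at w"]] by simp
  then show ?case by (auto intro!: exI[of _ "\<lambda>w. 0"] gen.g_const)
next
  case (g_add f g)
  show ?case
  proof (intro conjI ballI allI)
    fix w assume "w \<in> U" then show "(\<lambda>w. f w + g w) differentiable (at w)" using g_add by auto
  next
    fix v
    obtain g1 g2 where g1: "g1 \<in> gen U" "\<forall>w\<in>U. frechet_derivative f (at w) v = g1 w"
      and g2: "g2 \<in> gen U" "\<forall>w\<in>U. frechet_derivative g (at w) v = g2 w" using g_add by blast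
    have "frechet_derivative (\<lambda>w. f w + g w) (at w) v = g1 w + g2 w" if w: "w \<in> U" for w
    proof -
      have "((\<lambda>w. f w + g w) has_derivative (\<lambda>v. frechet_derivative f (at w) v + frechet_derivative g (at w) v)) (at w)"
        using g_add w by (intro has_derivative_add) (auto simp: frechet_derivative_works[symmetric])
      then show ?thesis using g1 g2 w by (simp add: frechet_derivative_at[symmetric])
    qed
    then show "\<exists>h. h \<in> gen U \<and> (\<forall>w\<in>U. frechet_derivative (\<lambda>w. f w + g w) (at w) v = h w)"
      using g1 g2 by (intro exI[of _ "\<lambda>w. g1 w + g2 w"]) (auto intro: gen.g_add)
  qed
next
  case (g_mult f g)
  show ?case
  proof (intro conjI ballI allI)
    fix w assume "w \<in> U" then show "(\<lambda>w. f w * g w) differentiable (at w)" using g_mult by auto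
  next
    fix v
    obtain g1 g2 where g1: "g1 \<in> gen U" "\<forall>w\<in>U. frechet_derivative f (at w) v = g1 w"
      and g2: "g2 \<in> gen U" "\<forall>w\<in>U. frechet_derivative g (at w) v = g2 w" using g_mult by blast
    have "frechet_derivative (\<lambda>w. f w * g w) (at w) v = f w * g2 w + g1 w * g w" if w: "w \<in> U" for w
    proof -
      have "((\<lambda>w. f w * g w) has_derivative (\<lambda>v. f w * frechet_derivative g (at w) v + frechet_derivative f (at w) v * g w)) (at w)"
        using g_mult w by (intro has_derivative_mult) (auto simp: frechet_derivative_works[symmetric])
      then show ?thesis using g1 g2 w by (simp add: frechet_derivative_at[symmetric])
    qed
    then show "\<exists>h. h \<in> gen U \<and> (\<forall>w\<in>U. frechet_derivative (\<lambda>w. f w * g w) (at w) v = h w)"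
      using g1 g2 g_mult by (intro exI[of _ "\<lambda>w. f w * g2 w + g1 w * g w"]) (auto intro: gen.g_add gen.g_mult)
  qed
next
  case (g_cnj f)
  show ?case
  proof (intro conjI ballI allI)
    fix w assume "w \<in> U" then show "(\<lambda>w. cnj (f w)) differentiable (at w)"
      using g_cnj bl_diff_comp[OF bounded_linear_cnj] by auto
  next
    fix v
    obtain g1 where g1: "g1 \<in> gen U" "\<forall>w\<in>U. frechet_derivative f (at w) v = g1 w" using g_cnj by blast
    have "frechet_derivative (\<lambda>w. cnj (f w)) (at w) v = cnj (g1 w)" if w: "w \<in> U" for w
    proof -
      have "((\<lambda>w. cnj (f w)) has_derivative (\<lambda>v. cnj (frechet_derivative f (at w) v))) (at w)"
        using g_cnj w bounded_linear.has_derivative[OF bounded_linear_cnj]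
        by (auto simp: frechet_derivative_works[symmetric])
      then show ?thesis using g1 w by (simp add: frechet_derivative_at[symmetric])
    qed
    then show "\<exists>h. h \<in> gen U \<and> (\<forall>w\<in>U. frechet_derivative (\<lambda>w. cnj (f w)) (at w) v = h w)"
      using g1 by (intro exI[of _ "\<lambda>w. cnj (g1 w)"]) (auto intro: gen.g_cnj)
  qed
next
  case (g_inv f)
  show ?case
  proof (intro conjI ballI allI)
    fix w assume "w \<in> U" then show "(\<lambda>w. inverse (f w)) differentiable (at w)"
      using g_inv has_derivative_inverse[where f=f and x=w and f'="frechet_derivative f (at w)" and S=UNIV]
      by (auto simp: frechet_derivative_works[symmetric] intro: differentiableI)
  next
    fix v
    obtain g1 where g1: "g1 \<in> gen U" "\<forall>w\<in>U. frechet_derivative f (at w) v = g1 w" using g_inv by blast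
    have "frechet_derivative (\<lambda>w. inverse (f w)) (at w) v = - (inverse (f w) * g1 w * inverse (f w))" if w: "w \<in> U" for w
    proof -
      have "((\<lambda>w. inverse (f w)) has_derivative (\<lambda>v. - (inverse (f w) * frechet_derivative f (at w) v * inverse (f w)))) (at w)"
        using g_inv w has_derivative_inverse[where f=f and x=w and f'="frechet_derivative f (at w)" and S=UNIV]
        by (auto simp: frechet_derivative_works[symmetric])
      then show ?thesis using g1 w by (simp add: frechet_derivative_at[symmetric])
    qed
    moreover have "(\<lambda>w. - (inverse (f w) * g1 w * inverse (f w))) \<in> gen U"
      using g1 g_inv by (intro gen_uminus gen.g_mult gen.g_inv) auto
    ultimately show "\<exists>h. h \<in> gen U \<and> (\<forall>w\<in>U. frechet_derivative (\<lambda>w. inverse (f w)) (at w) v = h w)"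
      by blast
  qed
next
  case (g_ln f)
  have Ld: "((\<lambda>w. Ln (f w)) has_derivative (\<lambda>v. inverse (f w) * frechet_derivative f (at w) v)) (at w)"
    if w: "w \<in> U" for w
  proof -
    have "(Ln has_derivative (\<lambda>h. inverse (f w) * h)) (at (f w))"
      using has_field_derivative_Ln[of "f w"] g_ln w by (simp add: has_field_derivative_def)
    moreover have "(f has_derivative frechet_derivative f (at w)) (at w)"
      using g_ln w by (auto simp: frechet_derivative_works[symmetric])
    ultimately show ?thesis using has_derivative_compose by blast
  qed
  show ?case
  proof (intro conjI ballI allI)
    fix w assume "w \<in> U" then show "(\<lambda>w. Ln (f w)) differentiable (at w)"
      using Ld differentiableI by blast
  next
    fix v
    obtain g1 where g1: "g1 \<in> gen U" "\<forall>w\<in>U. frechet_derivative f (at w) v = g1 w" using g_ln by blast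
    have "frechet_derivative (\<lambda>w. Ln (f w)) (at w) v = inverse (f w) * g1 w" if w: "w \<in> U" for w
      using Ld[OF w] g1 w by (simp add: frechet_derivative_at[symmetric])
    moreover have nz: "\<forall>w\<in>U. f w \<noteq> 0" using g_ln by (metis nonpos_Reals_zero_I)
    have "(\<lambda>w. inverse (f w) * g1 w) \<in> gen U"
      using g1 g_ln nz by (intro gen.g_mult gen.g_inv) auto
    ultimately show "\<exists>h. h \<in> gen U \<and> (\<forall>w\<in>U. frechet_derivative (\<lambda>w. Ln (f w)) (at w) v = h w)"
      by blast
  qed
next
  case (g_agree f g)
  have hd: "(g has_derivative frechet_derivative f (at w)) (at w)" if w: "w \<in> U" for w
    using has_derivative_transform_within_open[of f "frechet_derivative f (at w)" w UNIV U g] g_agree w assms(1)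
    by (auto simp: frechet_derivative_works[symmetric])
  show ?case
  proof (intro conjI ballI allI)
    fix w assume "w \<in> U" then show "g differentiable (at w)" using hd differentiableI by blast
  next
    fix v
    obtain g1 where g1: "g1 \<in> gen U" "\<forall>w\<in>U. frechet_derivative f (at w) v = g1 w" using g_agree by blast
    have "frechet_derivative g (at w) v = g1 w" if w: "w \<in> U" for w
      using hd[OF w] g1 w by (simp add: frechet_derivative_at[symmetric])
    then show "\<exists>h. h \<in> gen U \<and> (\<forall>w\<in>U. frechet_derivative g (at w) v = h w)" using g1 by blast
  qed
qed

lemma gen_smth:
  assumes "open U" "f \<in> gen U"
  shows "f \<in> smth U"
  using assms(2)
proof (coinduction arbitrary: f rule: smth.coinduct)
  case (smth f)
  then show ?case using gen_step[OF assms(1) smth] by blast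
qed

context fixes U :: "(complex^'m::finite) set" assumes oU: "open U"
begin

lemma sm_gen: "f \<in> gen U \<Longrightarrow> f \<in> smth U" by (rule gen_smth[OF oU])

lemma sm_const: "(\<lambda>w. c) \<in> smth U" by (rule sm_gen[OF g_const])
lemma sm_add: "f \<in> smth U \<Longrightarrow> g \<in> smth U \<Longrightarrow> (\<lambda>w. f w + g w) \<in> smth U"
  by (rule sm_gen) (intro g_add g_base)
lemma sm_mult: "f \<in> smth U \<Longrightarrow> g \<in> smth U \<Longrightarrow> (\<lambda>w. f w * g w) \<in> smth U"
  by (rule sm_gen) (intro g_mult g_base)
lemma sm_minus: "f \<in> smth U \<Longrightarrow> g \<in> smth U \<Longrightarrow> (\<lambda>w. f w - g w) \<in> smth U"
  by (rule sm_gen) (intro gen_minus g_base)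
lemma sm_uminus: "f \<in> smth U \<Longrightarrow> (\<lambda>w. - f w) \<in> smth U"
  by (rule sm_gen) (intro gen_uminus g_base)
lemma sm_cnj: "f \<in> smth U \<Longrightarrow> (\<lambda>w. cnj (f w)) \<in> smth U"
  by (rule sm_gen) (intro g_cnj g_base)
lemma sm_inv: "f \<in> smth U \<Longrightarrow> \<forall>w\<in>U. f w \<noteq> 0 \<Longrightarrow> (\<lambda>w. inverse (f w)) \<in> smth U"
  by (rule sm_gen) (intro g_inv g_base)
lemma sm_ln: "f \<in> smth U \<Longrightarrow> \<forall>w\<in>U. f w \<notin> \<real>\<^sub>\<le>\<^sub>0 \<Longrightarrow> (\<lambda>w. Ln (f w)) \<in> smth U"
  by (rule sm_gen) (intro g_ln g_base)
lemma sm_hol: "hol_on U f \<Longrightarrow> f \<in> smth U"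
  by (rule sm_gen) (intro g_hol)
lemma sm_agree: "f \<in> smth U \<Longrightarrow> \<forall>w\<in>U. g w = f w \<Longrightarrow> g \<in> smth U"
  by (rule sm_gen) (rule g_agree[OF g_base])
lemma sm_sum: "finite S \<Longrightarrow> \<forall>a\<in>S. h a \<in> smth U \<Longrightarrow> (\<lambda>w. \<Sum>a\<in>S. h a w) \<in> smth U"
  by (rule sm_gen) (intro gen_sum, auto intro: g_base)
lemma sm_prod: "finite S \<Longrightarrow> \<forall>a\<in>S. h a \<in> smth U \<Longrightarrow> (\<lambda>w. \<Prod>a\<in>S. h a w) \<in> smth U"
  by (rule sm_gen) (intro gen_prod, auto intro: g_base)

lemma sm_diff: assumes "f \<in> smth U" "w \<in> U" shows "f differentiable (at w)"
  using assms(1) by (cases rule: smth.cases) (use assms(2) in blast)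

lemma sm_wirt: 
  assumes "f \<in> smth U" shows "wirt i f \<in> smth U" "awirt i f \<in> smth U"
proof -
  obtain g1 where g1: "g1 \<in> smth U" "\<forall>w\<in>U. frechet_derivative f (at w) (axis i 1) = g1 w"
    using assms by (cases rule: smth.cases) blast
  obtain g2 where g2: "g2 \<in> smth U" "\<forall>w\<in>U. frechet_derivative f (at w) (axis i \<i>) = g2 w"
    using assms by (cases rule: smth.cases) blast
  have hd: "(f has_derivative frechet_derivative f (at w)) (at w)" if "w \<in> U" for w
    using sm_diff[OF assms that] by (simp add: frechet_derivative_works[symmetric])
  show "wirt i f \<in> smth U"
  proof (rule sm_agree)
    show "(\<lambda>w. (g1 w - \<i> * g2 w) * (1/2)) \<in> smth U"
      using g1 g2 by (intro sm_mult sm_minus sm_const) auto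
    show "\<forall>w\<in>U. wirt i f w = (g1 w - \<i> * g2 w) * (1/2)"
      using wirt_deriv(1)[OF hd] g1 g2 by simp
  qed
  show "awirt i f \<in> smth U"
  proof (rule sm_agree)
    show "(\<lambda>w. (g1 w + \<i> * g2 w) * (1/2)) \<in> smth U"
      using g1 g2 by (intro sm_mult sm_add sm_const) auto
    show "\<forall>w\<in>U. awirt i f w = (g1 w + \<i> * g2 w) * (1/2)"
      using wirt_deriv(2)[OF hd] g1 g2 by simp
  qed
qed

definition vsm :: "(complex^'m \<Rightarrow> complex^'n) \<Rightarrow> bool" where
  "vsm F \<longleftrightarrow> (\<forall>a. (\<lambda>w. F w $ a) \<in> smth U)"

lemma vsm_diff: "vsm F \<Longrightarrow> w \<in> U \<Longrightarrow> F differentiable (at w)"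
  unfolding vsm_def by (intro differentiable_vecI allI sm_diff) auto

lemma vsm_vwirt: "vsm F \<Longrightarrow> vsm (vwirt i F)"
  unfolding vsm_def vwirt_nth by (auto intro: sm_wirt)

lemma vsm_add: "vsm F \<Longrightarrow> vsm G \<Longrightarrow> vsm (\<lambda>w. F w + G w)"
  unfolding vsm_def by (auto intro: sm_add)
lemma vsm_minus: "vsm F \<Longrightarrow> vsm G \<Longrightarrow> vsm (\<lambda>w. F w - G w)"
  unfolding vsm_def by (auto intro: sm_minus)
lemma vsm_scale: "f \<in> smth U \<Longrightarrow> vsm F \<Longrightarrow> vsm (\<lambda>w. f w *s F w)"
  unfolding vsm_def by (auto intro: sm_mult)
lemma vsm_sum: "finite S \<Longrightarrow> \<forall>a\<in>S. vsm (H a) \<Longrightarrow> vsm (\<lambda>w. \<Sum>a\<in>S. H a w)"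
  unfolding vsm_def by (auto simp: sum_component intro!: sm_sum)

lemma sm_det:
  assumes "\<forall>r s. (\<lambda>w. C w $ r $ s) \<in> smth U"
  shows "(\<lambda>w. det (C w :: complex^'k::finite^'k)) \<in> smth U"
  unfolding det_def
proof (rule sm_sum)
  show "finite {p. p permutes (UNIV::'k set)}" by (rule finite_permutations) simp
  show "\<forall>p\<in>{p. p permutes UNIV}. (\<lambda>w. of_int (sign p) * (\<Prod>i\<in>UNIV. C w $ i $ p i)) \<in> smth U"
  proof
    fix p :: "'k \<Rightarrow> 'k"
    have "(\<lambda>w. \<Prod>i\<in>UNIV. C w $ i $ p i) \<in> smth U"
      by (rule sm_prod) (use assms in auto)
    then show "(\<lambda>w. of_int (sign p) * (\<Prod>i\<in>UNIV. C w $ i $ p i)) \<in> smth U"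
      by (rule sm_mult[OF sm_const])
  qed
qed


end

lemma matinv_entry:
  fixes A :: "complex^'k::finite^'k"
  assumes "det A \<noteq> 0"
  shows "matrix_inv A $ k $ q = det (\<chi> i j. if j = k then axis q 1 $ i else A$i$j) / det A"
proof -
  have "invertible A" using assms by (simp add: invertible_det_nz)
  then have "\<exists>A'. A ** A' = mat 1 \<and> A' ** A = mat 1" by (simp add: invertible_def)
  then have M: "A ** matrix_inv A = mat 1" unfolding matrix_inv_def using someI_ex[where P="\<lambda>A'. A ** A' = mat 1 \<and> A' ** A = mat 1"] by blast
  define x where "x = (\<chi> k. matrix_inv A $ k $ q)"
  have "A *v x = axis q 1"
  proof -
    have "(A *v x) $ r = (A ** matrix_inv A) $ r $ q" for r
      by (simp add: x_def matrix_vector_mult_def matrix_matrix_mult_def)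
    then show ?thesis using M by (simp add: vec_eq_iff mat_def axis_def)
  qed
  then have "x = (\<chi> k. det (\<chi> i j. if j = k then axis q 1 $ i else A$i$j) / det A)"
    using cramer[OF assms] by blast
  then have "x $ k = det (\<chi> i j. if j = k then axis q 1 $ i else A$i$j) / det A"
    by simp
  then show ?thesis by (simp add: x_def)
qed

lemma sum_atMost4: "sum f {..(4::nat)} = f 0 + f 1 + f 2 + f 3 + f 4"
proof -
  have "{..(4::nat)} = {0,1,2,3,4}" by auto
  then show ?thesis by (simp add: ac_simps)
qed

lemma sum_1_4: "sum f {(1::nat)..4} = f 1 + sum f {2..4}"
proof -
  have "{(1::nat)..4} = insert 1 {2..4}" by auto
  then show ?thesis by simp
qed

lemma sum_2_4: "sum f {(2::nat)..4} = f 2 + f 3 + f 4"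
proof -
  have "{(2::nat)..4} = {2,3,4}" by auto
  then show ?thesis by (simp add: ac_simps)
qed

lemma pr_add_left: "pr B (x + y) z = pr B x z + pr B y z"
  by (simp add: pr_def distrib_right sum.distrib)
lemma pr_add_right: "pr B x (y + z) = pr B x y + pr B x z"
  by (simp add: pr_def distrib_left sum.distrib)
lemma pr_scale_left: "pr B (c *s x) y = c * pr B x y"
  by (simp add: pr_def sum_distrib_left mult.assoc)
lemma pr_scale_right: "pr B x (c *s y) = c * pr B x y"
  by (simp add: pr_def sum_distrib_left ac_simps)
lemma pr_diff_left: "pr B (x - y) z = pr B x z - pr B y z"
  by (simp add: pr_def left_diff_distrib sum_subtractf)
lemma pr_diff_right: "pr B x (y - z) = pr B x y - pr B x z"
  by (simp add: pr_def right_diff_distrib sum_subtractf)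
lemma pr_sum_left: "finite S \<Longrightarrow> pr B (\<Sum>a\<in>S. x a) y = (\<Sum>a\<in>S. pr B (x a) y)"
  by (induction S rule: finite_induct) (simp_all add: pr_add_left, simp add: pr_def)
lemma pr_sum_right: "finite S \<Longrightarrow> pr B y (\<Sum>a\<in>S. x a) = (\<Sum>a\<in>S. pr B y (x a))"
  by (induction S rule: finite_induct) (simp_all add: pr_add_right, simp add: pr_def)
lemma pr_sym: "\<forall>a b. B $ a $ b = B $ b $ a \<Longrightarrow> pr B x y = pr B y x"
  unfolding pr_def by (subst sum.swap) (simp add: ac_simps)

lemma filt_zero: "\<forall>q\<le>4. csubspace (hp q z) \<Longrightarrow> 0 \<in> filt hp p z"
  unfolding filt_def csubspace_def by (rule CollectI, rule exI[of _ "\<lambda>q. 0"]) auto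

lemma filt_add:
  assumes "\<forall>q\<le>4. csubspace (hp q z)" "x \<in> filt hp p z" "y \<in> filt hp p z"
  shows "x + y \<in> filt hp p z"
proof -
  obtain a where a: "x = (\<Sum>q\<in>{p..4}. a q)" "\<forall>q\<in>{p..4}. a q \<in> hp q z" using assms(2) by (auto simp: filt_def)
  obtain b where b: "y = (\<Sum>q\<in>{p..4}. b q)" "\<forall>q\<in>{p..4}. b q \<in> hp q z" using assms(3) by (auto simp: filt_def)
  have "\<forall>q\<in>{p..4}. a q + b q \<in> hp q z" using a b assms(1) by (auto simp: csubspace_def)
  moreover have "x + y = (\<Sum>q\<in>{p..4}. a q + b q)" using a b by (simp add: sum.distrib)
  ultimately show ?thesis unfolding filt_def by blast
qed

lemma filt_scale:
  assumes "\<forall>q\<le>4. csubspace (hp q z)" "x \<in> filt hp p z"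
  shows "c *s x \<in> filt hp p z"
proof -
  obtain a where a: "x = (\<Sum>q\<in>{p..4}. a q)" "\<forall>q\<in>{p..4}. a q \<in> hp q z" using assms(2) by (auto simp: filt_def)
  have "\<forall>q\<in>{p..4}. c *s a q \<in> hp q z" using a assms(1) by (auto simp: csubspace_def)
  moreover have "c *s x = (\<Sum>q\<in>{p..4}. c *s a q)" using a by (simp add: vec_eq_iff sum_component sum_distrib_left)
  ultimately show ?thesis unfolding filt_def by blast
qed

lemma filt_diff:
  assumes "\<forall>q\<le>4. csubspace (hp q z)" "x \<in> filt hp p z" "y \<in> filt hp p z"
  shows "x - y \<in> filt hp p z"
  using filt_add[OF assms(1,2) filt_scale[OF assms(1,3), of "-1"]] by (simp add: vec_eq_iff)

lemma filt_sum:
  assumes "\<forall>q\<le>4. csubspace (hp q z)" "finite S" "\<forall>a\<in>S. x a \<in> filt hp p z"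
  shows "(\<Sum>a\<in>S. x a) \<in> filt hp p z"
  using assms(2,3) by (induction S rule: finite_induct) (auto intro: filt_zero[where hp=hp and z=z, OF assms(1)] filt_add[where hp=hp and z=z, OF assms(1)])

lemma filt_mono:
  assumes "\<forall>q\<le>4. csubspace (hp q z)" "p \<le> p'" "x \<in> filt hp p' z"
  shows "x \<in> filt hp p z"
proof -
  obtain a where a: "x = (\<Sum>q\<in>{p'..4}. a q)" "\<forall>q\<in>{p'..4}. a q \<in> hp q z" using assms(3) by (auto simp: filt_def)
  define b where "b q = (if p' \<le> q then a q else 0)" for q
  have "\<forall>q\<in>{p..4}. b q \<in> hp q z" using a assms(1) by (auto simp: b_def csubspace_def)
  moreover have "(\<Sum>q\<in>{p..4}. b q) = (\<Sum>q\<in>{p..4} \<inter> {q. p' \<le> q}. a q)"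
    unfolding b_def by (simp add: sum.inter_restrict)
  moreover have "{p..4} \<inter> {q. p' \<le> q} = {p'..(4::nat)}" using assms(2) by auto
  ultimately have "x = (\<Sum>q\<in>{p..4}. b q) \<and> (\<forall>q\<in>{p..4}. b q \<in> hp q z)" using a by auto
  then show ?thesis unfolding filt_def by blast
qed

lemma filt4: "filt hp 4 z = hp 4 z"
  unfolding filt_def by auto

context
  fixes B :: "real^'n::finite^'n" and hp and U :: "(complex^'m::finite) set"
  assumes hs: "hodge_structure B hp U"
begin

lemma hs_sub: "z \<in> U \<Longrightarrow> \<forall>q\<le>4. csubspace (hp q z)"
  using hs[unfolded hodge_structure_def, THEN conjunct2, THEN conjunct2, rule_format, THEN conjunct1] by blast

lemma hs_orth: "z \<in> U \<Longrightarrow> p \<le> 4 \<Longrightarrow> p' \<le> 4 \<Longrightarrow> p + p' \<noteq> 4 \<Longrightarrow> x \<in> hp p z \<Longrightarrow> y \<in> hp p' z \<Longrightarrow> pr B x y = 0"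
  using hs[unfolded hodge_structure_def, THEN conjunct2, THEN conjunct2, rule_format,
     THEN conjunct2, THEN conjunct2, THEN conjunct2, THEN conjunct1] by blast

lemma hs_sym: "pr B x y = pr B y x"
  using hs[unfolded hodge_structure_def, THEN conjunct1] by (rule pr_sym)

lemma filt_orth:
  assumes "z \<in> U" "x \<in> filt hp p z" "y \<in> filt hp q z" "5 \<le> p + q"
  shows "pr B x y = 0"
proof -
  obtain a where a: "x = (\<Sum>r\<in>{p..4}. a r)" "\<forall>r\<in>{p..4}. a r \<in> hp r z" using assms(2) by (auto simp: filt_def)
  obtain b where b: "y = (\<Sum>r\<in>{q..4}. b r)" "\<forall>r\<in>{q..4}. b r \<in> hp r z" using assms(3) by (auto simp: filt_def)
  have "pr B x y = (\<Sum>r\<in>{p..4}. pr B (a r) y)"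
    using a by (simp add: pr_sum_left)
  also have "\<dots> = (\<Sum>r\<in>{p..4}. \<Sum>s\<in>{q..4}. pr B (a r) (b s))"
    using b by (simp add: pr_sum_right)
  also have "\<dots> = 0"
  proof (intro sum.neutral ballI)
    fix r s assume rs: "r \<in> {p..4}" "s \<in> {q..4}"
    show "pr B (a r) (b s) = 0"
      using hs_orth[where z=z and p=r and p'=s and x="a r" and y="b s"] a b rs assms(1,4) by auto
  qed
  finally show ?thesis .
qed

lemma hcomp_pr:
  assumes z: "z \<in> U" and v: "v \<in> filt hp 1 z" and x: "x \<in> filt hp 3 z"
  shows "pr B (hcomp hp 1 z v) x = pr B v x"
proof -
  obtain y where y: "v = (\<Sum>q\<in>{1..4}. y q)" "\<forall>q\<in>{1..4}. y q \<in> hp q z" using v by (auto simp: filt_def)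
  have sub: "\<forall>q\<le>4. csubspace (hp q z)" using hs_sub[OF z] .
  have uniq: "\<exists>!Y. (\<forall>q. (q \<le> 4 \<longrightarrow> Y q \<in> hp q z) \<and> (4 < q \<longrightarrow> Y q = 0)) \<and> v = (\<Sum>q\<le>4. Y q)"
    using hs[unfolded hodge_structure_def, THEN conjunct2, THEN conjunct2, rule_format, OF z, THEN conjunct2, THEN conjunct1]
    by (rule spec)
  define Y where "Y q = (if 1 \<le> q \<and> q \<le> 4 then y q else 0)" for q
  have Y: "(\<forall>q. (q \<le> 4 \<longrightarrow> Y q \<in> hp q z) \<and> (4 < q \<longrightarrow> Y q = 0)) \<and> v = (\<Sum>q\<le>4. Y q)"
  proof (intro conjI allI impI)
    fix q :: nat assume "q \<le> 4" then show "Y q \<in> hp q z"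
      using y sub by (auto simp: Y_def csubspace_def)
  next
    fix q :: nat assume "4 < q" then show "Y q = 0" by (simp add: Y_def)
  next
    show "v = (\<Sum>q\<le>4. Y q)" unfolding sum_atMost4 y(1) sum_1_4 sum_2_4 by (simp add: Y_def)
  qed
  have hc: "hcomp hp 1 z v = y 1"
    unfolding hcomp_def
  proof (rule the_equality)
    show "\<exists>y'. (\<forall>q\<le>4. y' q \<in> hp q z) \<and> v = (\<Sum>q\<le>4. y' q) \<and> y' 1 = y 1"
      using Y by (intro exI[of _ Y]) (simp add: Y_def)
  next
    fix x' assume "\<exists>y'. (\<forall>q\<le>4. y' q \<in> hp q z) \<and> v = (\<Sum>q\<le>4. y' q) \<and> y' 1 = x'"
    then obtain y' where y': "\<forall>q\<le>4. y' q \<in> hp q z" "v = (\<Sum>q\<le>4. y' q)" "y' 1 = x'" by blast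
    define Y' where "Y' q = (if q \<le> 4 then y' q else 0)" for q
    have "(\<forall>q. (q \<le> 4 \<longrightarrow> Y' q \<in> hp q z) \<and> (4 < q \<longrightarrow> Y' q = 0)) \<and> v = (\<Sum>q\<le>4. Y' q)"
    proof (intro conjI allI impI)
      fix q :: nat assume "q \<le> 4" then show "Y' q \<in> hp q z" using y' by (simp add: Y'_def)
    next
      fix q :: nat assume "4 < q" then show "Y' q = 0" by (simp add: Y'_def)
    next
      have "(\<Sum>q\<le>4. Y' q) = (\<Sum>q\<le>4. y' q)" by (simp add: Y'_def)
      then show "v = (\<Sum>q\<le>4. Y' q)" using y' by simp
    qed
    then have "Y' = Y" using uniq Y by blast
    then have "Y' 1 = Y 1" by simp
    then show "x' = y 1" using y' by (simp add: Y'_def Y_def)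
  qed
  have "v = y 1 + (\<Sum>q\<in>{2..4}. y q)" using y(1) sum_1_4 by simp
  moreover have "(\<Sum>q\<in>{2..4}. y q) \<in> filt hp 2 z"
    unfolding filt_def using y by auto
  then have "pr B (\<Sum>q\<in>{2..4}. y q) x = 0" by (rule filt_orth[OF z _ x]) simp
  ultimately show ?thesis using hc by (simp add: pr_add_left)
qed

end


lemma wirt_pr:
  assumes F: "F differentiable (at z)" and G: "G differentiable (at z)"
  shows "wirt i (\<lambda>w. pr B (F w) (G w)) z = pr B (vwirt i F z) (G z) + pr B (F z) (vwirt i G z)"
proof -
  let ?c = "\<lambda>a b. complex_of_real (B $ a $ b)"
  have dF: "\<And>a. (\<lambda>w. F w $ a) differentiable (at z)" using differentiable_nth[OF F] .
  have dG: "\<And>a. (\<lambda>w. G w $ a) differentiable (at z)" using differentiable_nth[OF G] .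
  have dFc: "\<And>a b. (\<lambda>w. F w $ a * ?c a b) differentiable (at z)"
    by (rule differentiable_mult[OF dF differentiable_const])
  have d1: "\<And>a b. (\<lambda>w. F w $ a * ?c a b * G w $ b) differentiable (at z)"
    by (rule differentiable_mult[OF dFc dG])
  have d2: "\<And>a. (\<lambda>w. \<Sum>b\<in>UNIV. F w $ a * ?c a b * G w $ b) differentiable (at z)"
    using d1 by (intro differentiable_sum) auto
  have w1: "wirt i (\<lambda>w. F w $ a * ?c a b * G w $ b) z
      = wirt i (\<lambda>w. F w $ a) z * ?c a b * G z $ b + F z $ a * ?c a b * wirt i (\<lambda>w. G w $ b) z" for a b
  proof -
    have "wirt i (\<lambda>w. F w $ a * ?c a b * G w $ b) z
        = wirt i (\<lambda>w. F w $ a * ?c a b) z * G z $ b + F z $ a * ?c a b * wirt i (\<lambda>w. G w $ b) z"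
      using wirt_mult[OF dFc[of a b] dG[of b], of i] by simp
    moreover have "wirt i (\<lambda>w. F w $ a * ?c a b) z = wirt i (\<lambda>w. F w $ a) z * ?c a b"
      using wirt_mult[OF dF[of a] differentiable_const[of "?c a b"], of i] by (simp add: wirt_const)
    ultimately show ?thesis by simp
  qed
  have "wirt i (\<lambda>w. pr B (F w) (G w)) z = wirt i (\<lambda>w. \<Sum>a\<in>UNIV. \<Sum>b\<in>UNIV. F w $ a * ?c a b * G w $ b) z"
    by (simp add: pr_def)
  also have "\<dots> = (\<Sum>a\<in>UNIV. wirt i (\<lambda>w. \<Sum>b\<in>UNIV. F w $ a * ?c a b * G w $ b) z)"
    using d2 by (intro wirt_sum) auto
  also have "\<dots> = (\<Sum>a\<in>UNIV. \<Sum>b\<in>UNIV. wirt i (\<lambda>w. F w $ a * ?c a b * G w $ b) z)"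
    using d1 by (intro sum.cong refl wirt_sum) auto
  also have "\<dots> = pr B (vwirt i F z) (G z) + pr B (F z) (vwirt i G z)"
    unfolding w1 by (simp add: pr_def vwirt_nth sum.distrib)
  finally show ?thesis .
qed

lemma power_i4: "\<i> ^ 4 = (1::complex)"
  by (simp add: eval_nat_numeral)

context
  fixes B :: "real^'n::finite^'n" and hp :: "nat \<Rightarrow> complex^'m::finite \<Rightarrow> (complex^'n) set"
    and U :: "(complex^'m) set" and \<Omega> :: "complex^'m \<Rightarrow> complex^'n"
  assumes oU: "open U" and hs: "hodge_structure B hp U" and tr: "transversal hp U"
    and hol: "\<forall>a. hol_on U (\<lambda>w. \<Omega> w $ a)"
    and om: "\<forall>w\<in>U. \<Omega> w \<noteq> 0 \<and> hp 4 w = {c *s \<Omega> w | c. True}"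
    and dg: "\<forall>w\<in>U. det (gmat B \<Omega> w) \<noteq> 0"
begin

lemmas SM = sm_const[OF oU] sm_add[OF oU] sm_mult[OF oU] sm_minus[OF oU] sm_uminus[OF oU]
  sm_cnj[OF oU] sm_wirt[OF oU]
lemmas VSM = vsm_vwirt[OF oU] vsm_add[OF oU] vsm_minus[OF oU] vsm_scale[OF oU]

lemma Om_vsm: "vsm U \<Omega>"
  unfolding vsm_def[OF oU] using hol by (auto intro: sm_hol[OF oU])

lemma pr_sm: "vsm U F \<Longrightarrow> vsm U G \<Longrightarrow> (\<lambda>w. pr B (F w) (G w)) \<in> smth U"
  unfolding pr_def vsm_def[OF oU]
  by (intro sm_sum[OF oU] ballI SM) auto

lemma vcnj_vsm: "vsm U F \<Longrightarrow> vsm U (\<lambda>w. vcnj (F w))"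
  unfolding vsm_def[OF oU] vcnj_def by (auto intro: SM)

lemma Om_hp4: "w \<in> U \<Longrightarrow> \<Omega> w \<in> hp 4 w"
  using om by (auto intro!: exI[of _ 1])

lemma pos: "w \<in> U \<Longrightarrow> pr B (\<Omega> w) (vcnj (\<Omega> w)) \<notin> \<real>\<^sub>\<le>\<^sub>0"
proof -
  assume w: "w \<in> U"
  have "\<forall>p\<le>4. \<forall>x\<in>hp p w. x \<noteq> 0 \<longrightarrow>
            (let c = \<i> ^ p * (- \<i>) ^ (4 - p) * pr B x (vcnj x) in Im c = 0 \<and> Re c > 0)"
    using hs[unfolded hodge_structure_def, THEN conjunct2, THEN conjunct2, rule_format, OF w,
     THEN conjunct2, THEN conjunct2, THEN conjunct2, THEN conjunct2] .
  then have "let c = \<i> ^ 4 * (- \<i>) ^ (4 - 4) * pr B (\<Omega> w) (vcnj (\<Omega> w)) in Im c = 0 \<and> Re c > 0"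
    using Om_hp4[OF w] om w by blast
  then have "Im (pr B (\<Omega> w) (vcnj (\<Omega> w))) = 0 \<and> Re (pr B (\<Omega> w) (vcnj (\<Omega> w))) > 0"
    by (simp only: Let_def power_i4 diff_self_eq_0 power_0 mult_1)
  then show ?thesis by (auto simp: complex_nonpos_Reals_iff)
qed

lemma lw_sm: "lw B \<Omega> \<in> smth U"
proof -
  have "lw B \<Omega> = (\<lambda>z. Ln (pr B (\<Omega> z) (vcnj (\<Omega> z))))" by (rule ext) (simp add: lw_def)
  moreover have "(\<lambda>z. Ln (pr B (\<Omega> z) (vcnj (\<Omega> z)))) \<in> smth U"
    using pos by (intro sm_ln[OF oU] pr_sm Om_vsm vcnj_vsm) auto
  ultimately show ?thesis by simp
qed

lemma K_sm: "Kf B \<Omega> i \<in> smth U"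
proof -
  have "Kf B \<Omega> i = (\<lambda>z. - wirt i (lw B \<Omega>) z)" by (rule ext) (simp add: Kf_def)
  then show ?thesis using lw_sm by (simp add: SM)
qed

lemma gm_sm: "gm B \<Omega> i j \<in> smth U"
proof -
  have "gm B \<Omega> i j = (\<lambda>z. - wirt i (awirt j (lw B \<Omega>)) z)" by (rule ext) (simp add: gm_def)
  then show ?thesis using lw_sm by (simp add: SM)
qed

lemma ginv_sm: "(\<lambda>w. ginv B \<Omega> w $ k $ q) \<in> smth U"
proof (rule sm_agree[OF oU])
  let ?C = "\<lambda>w. (\<chi> i j. if j = k then axis q 1 $ i else transpose (gmat B \<Omega> w) $ i $ j) :: complex^'m^'m"
  show "\<forall>w\<in>U. ginv B \<Omega> w $ k $ q = det (?C w) * inverse (det (gmat B \<Omega> w))"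
    using dg by (simp add: ginv_def matinv_entry divide_inverse)
  have e: "(\<lambda>w. ?C w $ r $ s) \<in> smth U" for r s
  proof (cases "s = k")
    case True then show ?thesis by (simp add: SM)
  next
    case False then show ?thesis by (simp add: transpose_def gmat_def gm_sm)
  qed
  have "(\<lambda>w. gmat B \<Omega> w $ r $ s) \<in> smth U" for r s by (simp add: gmat_def gm_sm)
  then show "(\<lambda>w. det (?C w) * inverse (det (gmat B \<Omega> w))) \<in> smth U"
    using e dg by (intro SM sm_inv[OF oU] sm_det[OF oU]) auto
qed

lemma Gam_sm: "Gam B \<Omega> k i j \<in> smth U"
proof -
  have "Gam B \<Omega> k i j = (\<lambda>z. \<Sum>q\<in>UNIV. ginv B \<Omega> z $ k $ q * wirt j (gm B \<Omega> i q) z)"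
    by (rule ext) (simp add: Gam_def)
  moreover have "(\<lambda>z. \<Sum>q\<in>UNIV. ginv B \<Omega> z $ k $ q * wirt j (gm B \<Omega> i q) z) \<in> smth U"
    by (intro sm_sum[OF oU] ballI SM ginv_sm gm_sm) simp_all
  ultimately show ?thesis by simp
qed

lemma D1_eq: "D1 B \<Omega> i = (\<lambda>w. vwirt i \<Omega> w + Kf B \<Omega> i w *s \<Omega> w)"
  by (rule ext) (simp add: D1_def)

lemma KOm_vsm: "vsm U (\<lambda>w. Kf B \<Omega> i w *s \<Omega> w)"
  by (intro VSM K_sm Om_vsm)

lemma D1_vsm: "vsm U (D1 B \<Omega> i)"
  unfolding D1_eq by (intro VSM KOm_vsm Om_vsm)

lemma D2_eq: "D2 B \<Omega> j i = (\<lambda>z. vwirt j (D1 B \<Omega> i) z - (\<Sum>k\<in>UNIV. Gam B \<Omega> k i j z *s D1 B \<Omega> k z)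
                    + Kf B \<Omega> j z *s D1 B \<Omega> i z)"
  by (rule ext) (simp add: D2_def)

lemma D2_vsm: "vsm U (D2 B \<Omega> j i)"
  unfolding D2_eq by (intro VSM vsm_sum[OF oU] ballI D1_vsm Gam_sm K_sm) simp_all


lemma sub: "w \<in> U \<Longrightarrow> \<forall>q\<le>4. csubspace (hp q w)"
  by (rule hs_sub[OF hs])

lemma fadd: "w \<in> U \<Longrightarrow> x \<in> filt hp p w \<Longrightarrow> y \<in> filt hp p w \<Longrightarrow> x + y \<in> filt hp p w"
  by (rule filt_add[where hp=hp and z=w, OF sub])
lemma fdiff: "w \<in> U \<Longrightarrow> x \<in> filt hp p w \<Longrightarrow> y \<in> filt hp p w \<Longrightarrow> x - y \<in> filt hp p w"
  by (rule filt_diff[where hp=hp and z=w, OF sub])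
lemma fscale: "w \<in> U \<Longrightarrow> x \<in> filt hp p w \<Longrightarrow> c *s x \<in> filt hp p w"
  by (rule filt_scale[where hp=hp and z=w, OF sub])
lemma fsum: "w \<in> U \<Longrightarrow> finite S \<Longrightarrow> \<forall>a\<in>S. x a \<in> filt hp p w \<Longrightarrow> (\<Sum>a\<in>S. x a) \<in> filt hp p w"
  by (rule filt_sum[where hp=hp and z=w, OF sub])
lemma fmono: "w \<in> U \<Longrightarrow> p \<le> p' \<Longrightarrow> x \<in> filt hp p' w \<Longrightarrow> x \<in> filt hp p w"
  by (rule filt_mono[where hp=hp and z=w, OF sub])

lemma Tr: "p \<in> {1..4} \<Longrightarrow> vsm U s \<Longrightarrow> \<forall>w\<in>U. s w \<in> filt hp p w \<Longrightarrow> w \<in> U \<Longrightarrow> vwirt i s w \<in> filt hp (p - 1) w"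
  using tr[unfolded transversal_def, rule_format, of p w s i] vsm_diff[OF oU] by blast

lemma S1: "\<forall>w\<in>U. \<Omega> w \<in> filt hp 4 w"
  using Om_hp4 by (simp add: filt4)

lemma S2: "\<forall>w\<in>U. vwirt l \<Omega> w \<in> filt hp 3 w"
  using Tr[of 4 \<Omega>, OF _ Om_vsm S1] by simp

lemma S3: "\<forall>w\<in>U. vwirt k (vwirt l \<Omega>) w \<in> filt hp 2 w"
  using Tr[of 3 "vwirt l \<Omega>", OF _ vsm_vwirt[OF oU Om_vsm] S2] by simp

lemma S4: "\<forall>w\<in>U. vwirt j (vwirt k (vwirt l \<Omega>)) w \<in> filt hp 1 w"
  using Tr[of 2 "vwirt k (vwirt l \<Omega>)", OF _ vsm_vwirt[OF oU vsm_vwirt[OF oU Om_vsm]] S3] by simp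

lemma S5a: "\<forall>w\<in>U. Kf B \<Omega> l w *s \<Omega> w \<in> filt hp 4 w"
  using S1 by (auto intro: fscale)

lemma S5b: "\<forall>w\<in>U. vwirt k (\<lambda>w. Kf B \<Omega> l w *s \<Omega> w) w \<in> filt hp 3 w"
  using Tr[of 4 "\<lambda>w. Kf B \<Omega> l w *s \<Omega> w", OF _ KOm_vsm S5a] by simp

lemma S6: "\<forall>w\<in>U. D1 B \<Omega> q w \<in> filt hp 3 w"
proof
  fix w assume w: "w \<in> U"
  have "Kf B \<Omega> q w *s \<Omega> w \<in> filt hp 3 w"
    using fmono[OF w, of 3 4] S5a w by simp
  then show "D1 B \<Omega> q w \<in> filt hp 3 w"
    using S2 w by (simp add: D1_def fadd[OF w])
qed

definition "EE k l w = D2 B \<Omega> k l w - vwirt k (vwirt l \<Omega>) w"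

lemma EE_vsm: "vsm U (EE k l)"
proof -
  have "EE k l = (\<lambda>w. D2 B \<Omega> k l w - vwirt k (vwirt l \<Omega>) w)" by (rule ext) (simp add: EE_def)
  then show ?thesis by (simp add: VSM D2_vsm Om_vsm)
qed

lemma S7: "\<forall>w\<in>U. EE k l w \<in> filt hp 3 w"
proof
  fix w assume w: "w \<in> U"
  note sw = sub[OF w]
  have "vwirt k (D1 B \<Omega> l) w = vwirt k (vwirt l \<Omega>) w + vwirt k (\<lambda>w. Kf B \<Omega> l w *s \<Omega> w) w"
    unfolding D1_eq
    by (rule vwirt_add[OF vsm_diff[OF oU vsm_vwirt[OF oU Om_vsm] w] vsm_diff[OF oU KOm_vsm w]])
  then have e: "EE k l w = vwirt k (\<lambda>w. Kf B \<Omega> l w *s \<Omega> w) w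
      - (\<Sum>q\<in>UNIV. Gam B \<Omega> q l k w *s D1 B \<Omega> q w) + Kf B \<Omega> k w *s D1 B \<Omega> l w"
    by (simp add: EE_def D2_def)
  have "(\<Sum>q\<in>UNIV. Gam B \<Omega> q l k w *s D1 B \<Omega> q w) \<in> filt hp 3 w"
    using S6 w by (intro fsum[OF w] ballI fscale[OF w]) auto
  moreover have "Kf B \<Omega> k w *s D1 B \<Omega> l w \<in> filt hp 3 w"
    using S6 w by (intro fscale[OF w]) auto
  ultimately show "EE k l w \<in> filt hp 3 w"
    unfolding e using S5b w by (intro fadd[OF w] fdiff[OF w]) auto
qed

lemma S8: "\<forall>w\<in>U. D2 B \<Omega> k l w \<in> filt hp 2 w"
proof
  fix w assume w: "w \<in> U"
  have "D2 B \<Omega> k l w = vwirt k (vwirt l \<Omega>) w + EE k l w" by (simp add: EE_def)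
  moreover have "EE k l w \<in> filt hp 2 w" using fmono[OF w, of 2 3] S7 w by simp
  ultimately show "D2 B \<Omega> k l w \<in> filt hp 2 w" using S3 w by (simp add: fadd[OF w])
qed

lemma main1:
  assumes z: "z \<in> U"
  shows "xi B \<Omega> i j k l z = - pr B (D3 B hp \<Omega> j k l z) (D1 B \<Omega> i z)"
proof -
  note sz = sub[OF z]
  let ?O3 = "vwirt j (vwirt k (vwirt l \<Omega>))"
  have O2v: "vsm U (vwirt k (vwirt l \<Omega>))" by (intro VSM Om_vsm)
  have O3v: "vsm U ?O3" by (intro VSM Om_vsm)
  have D2s: "D2 B \<Omega> k l = (\<lambda>w. vwirt k (vwirt l \<Omega>) w + EE k l w)"
    by (rule ext) (simp add: EE_def)
  have a: "vwirt j (D2 B \<Omega> k l) z = ?O3 z + vwirt j (EE k l) z"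
    unfolding D2s by (rule vwirt_add[OF vsm_diff[OF oU O2v z] vsm_diff[OF oU EE_vsm z]])
  have Ej: "vwirt j (EE k l) z \<in> filt hp 2 z"
    using Tr[of 3 "EE k l", OF _ EE_vsm S7 z] by simp
  define R where "R = vwirt j (EE k l) z + Kf B \<Omega> j z *s D2 B \<Omega> k l z
        - (\<Sum>p\<in>UNIV. Gam B \<Omega> p k j z *s D2 B \<Omega> p l z)
        - (\<Sum>p\<in>UNIV. Gam B \<Omega> p l j z *s D2 B \<Omega> k p z)"
  have T: "T3 B \<Omega> j k l z = ?O3 z + R"
    unfolding T3_def R_def a by simp
  have R2: "R \<in> filt hp 2 z"
    unfolding R_def using Ej S8 z
    by (intro fdiff[OF z] fadd[OF z] fsum[OF z] ballI fscale[OF z]) auto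
  have O31: "?O3 z \<in> filt hp 1 z" using S4 z by blast
  have T1: "T3 B \<Omega> j k l z \<in> filt hp 1 z"
    unfolding T using fmono[OF z, of 1 2] R2 O31 by (simp add: fadd[OF z])
  have D13: "D1 B \<Omega> i z \<in> filt hp 3 z" using S6 z by blast
  have "pr B (D3 B hp \<Omega> j k l z) (D1 B \<Omega> i z) = pr B (T3 B \<Omega> j k l z) (D1 B \<Omega> i z)"
    unfolding D3_def by (rule hcomp_pr[OF hs z T1 D13])
  also have "\<dots> = pr B (?O3 z) (D1 B \<Omega> i z)"
    unfolding T pr_add_left using filt_orth[OF hs z R2 D13] by simp
  also have "\<dots> = pr B (?O3 z) (vwirt i \<Omega> z)"
  proof -
    have "pr B (?O3 z) (\<Omega> z) = 0" using filt_orth[OF hs z O31, of "\<Omega> z" 4] S1 z by simp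
    then show ?thesis by (simp add: D1_def pr_add_right pr_scale_right)
  qed
  finally have 1: "pr B (D3 B hp \<Omega> j k l z) (D1 B \<Omega> i z) = pr B (?O3 z) (vwirt i \<Omega> z)" .
  have "wirt i (\<lambda>w. pr B (\<Omega> w) (?O3 w)) z = 0"
  proof (rule wirt_local0[OF oU z], rule ballI)
    fix w assume w: "w \<in> U"
    show "pr B (\<Omega> w) (?O3 w) = 0" using filt_orth[OF hs w, of "\<Omega> w" 4 "?O3 w" 1] S1 S4 w by simp
  qed
  moreover have "wirt i (\<lambda>w. pr B (\<Omega> w) (?O3 w)) z = pr B (vwirt i \<Omega> z) (?O3 z) + pr B (\<Omega> z) (vwirt i ?O3 z)"
    by (rule wirt_pr[OF vsm_diff[OF oU Om_vsm z] vsm_diff[OF oU O3v z]])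
  ultimately have "xi B \<Omega> i j k l z = - pr B (vwirt i \<Omega> z) (?O3 z)"
    by (simp add: xi_def eq_neg_iff_add_eq_0 add.commute)
  then show ?thesis using 1 hs_sym[OF hs] by simp
qed


lemma xi_eq:
  assumes z: "z \<in> U"
  shows "xi B \<Omega> i j k l z = - pr B (vwirt i \<Omega> z) (vwirt j (vwirt k (vwirt l \<Omega>)) z)"
proof -
  let ?O3 = "vwirt j (vwirt k (vwirt l \<Omega>))"
  have O3v: "vsm U ?O3" by (intro VSM Om_vsm)
  have "wirt i (\<lambda>w. pr B (\<Omega> w) (?O3 w)) z = 0"
  proof (rule wirt_local0[OF oU z], rule ballI)
    fix w assume w: "w \<in> U"
    show "pr B (\<Omega> w) (?O3 w) = 0" using filt_orth[OF hs w, of "\<Omega> w" 4 "?O3 w" 1] S1 S4 w by simp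
  qed
  moreover have "wirt i (\<lambda>w. pr B (\<Omega> w) (?O3 w)) z = pr B (vwirt i \<Omega> z) (?O3 z) + pr B (\<Omega> z) (vwirt i ?O3 z)"
    by (rule wirt_pr[OF vsm_diff[OF oU Om_vsm z] vsm_diff[OF oU O3v z]])
  ultimately show ?thesis
    by (simp add: xi_def eq_neg_iff_add_eq_0 add.commute)
qed

lemma main2:
  assumes z: "z \<in> U"
  shows "xi B \<Omega> i j k l z = pr B (D2 B \<Omega> k l z) (D2 B \<Omega> j i z)"
proof -
  let ?O3 = "vwirt j (vwirt k (vwirt l \<Omega>))"
  let ?A = "vwirt k (vwirt l \<Omega>)"
  let ?C = "vwirt j (vwirt i \<Omega>)"
  have O1v: "vsm U (vwirt i \<Omega>)" by (intro VSM Om_vsm)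
  have O2v: "vsm U ?A" by (intro VSM Om_vsm)
  have "wirt j (\<lambda>w. pr B (vwirt i \<Omega> w) (?A w)) z = 0"
  proof (rule wirt_local0[OF oU z], rule ballI)
    fix w assume w: "w \<in> U"
    show "pr B (vwirt i \<Omega> w) (?A w) = 0"
      using filt_orth[OF hs w, of "vwirt i \<Omega> w" 3 "?A w" 2] S2 S3 w by simp
  qed
  moreover have "wirt j (\<lambda>w. pr B (vwirt i \<Omega> w) (?A w)) z = pr B (?C z) (?A z) + pr B (vwirt i \<Omega> z) (?O3 z)"
    by (rule wirt_pr[OF vsm_diff[OF oU O1v z] vsm_diff[OF oU O2v z]])
  ultimately have "pr B (?C z) (?A z) + pr B (vwirt i \<Omega> z) (?O3 z) = 0" by simp
  then have "pr B (?C z) (?A z) = - pr B (vwirt i \<Omega> z) (?O3 z)" by (simp add: eq_neg_iff_add_eq_0)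
  then have 1: "xi B \<Omega> i j k l z = pr B (?C z) (?A z)"
    using xi_eq[OF z, of i j k l] by simp
  have A2: "?A z \<in> filt hp 2 z" and C2: "?C z \<in> filt hp 2 z" using S3 z by blast+
  have E1: "EE k l z \<in> filt hp 3 z" and E2: "EE j i z \<in> filt hp 3 z" using S7 z by blast+
  have "pr B (D2 B \<Omega> k l z) (D2 B \<Omega> j i z) = pr B (?A z + EE k l z) (?C z + EE j i z)"
    by (simp add: EE_def)
  also have "\<dots> = pr B (?A z) (?C z)"
    using filt_orth[OF hs z A2 E2] filt_orth[OF hs z E1 C2] filt_orth[OF hs z E1 E2]
    by (simp add: pr_add_left pr_add_right)
  finally show ?thesis using 1 hs_sym[OF hs] by simp
qed

end

theorem lemma4p5:
  fixes B :: "real^'n::finite^'n"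
    and hp :: "nat \<Rightarrow> complex^'m::finite \<Rightarrow> (complex^'n) set"
    and U :: "(complex^'m) set"
    and \<Omega> :: "complex^'m \<Rightarrow> complex^'n"
  assumes "open U"
    and "hodge_structure B hp U"
    and "transversal hp U"
    and "\<forall>a. hol_on U (\<lambda>w. \<Omega> w $ a)"
    and "\<forall>w\<in>U. \<Omega> w \<noteq> 0 \<and> hp 4 w = {c *s \<Omega> w | c. True}"
    and "\<forall>w\<in>U. det (gmat B \<Omega> w) \<noteq> 0"
    and "z \<in> U"
  shows "xi B \<Omega> i j k l z = - pr B (D3 B hp \<Omega> j k l z) (D1 B \<Omega> i z)
       \<and> xi B \<Omega> i j k l z = pr B (D2 B \<Omega> k l z) (D2 B \<Omega> j i z)"
  using main1[OF assms] main2[OF assms] by blast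

end
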